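(* Consider a cellular network with $n$ base stations $\mathcal{N}=\{1,\dots,n\}$, base station $i$ serving a nonempty set $\mathcal{J}_i$ of users (pairwise disjoint), channel gains $g_{kj}>0$, noise power $\sigma^2>0$, and $$f_i(\mathbf{x};\mathbf{r},\mathbf{p})=\sum_{j\in\mathcal{J}_i}\frac{r_{ij}}{\log\Big(1+\frac{p_i g_{ij}}{\sum_{k\ne i} p_k g_{kj} x_k+\sigma^2}\Big)}.$$ Fix strictly positive $\mathbf{x}$ and $\mathbf{r}$. Then for every $i\in\mathcal{N}$ there exists a function $h_i(\cdot;\mathbf{x},\mathbf{r}):\mathbb{R}^{n-1}_{++}\to\mathbb{R}_{++}$ such that for every $\bar{\mathbf{p}}_i\in\mathbb{R}^{n-1}_{++}$, $p_i=h_i(\bar{\mathbf{p}}_i;\mathbf{x},\mathbf{r})$ is the unique $p_i>0$ with $x_i=f_i(\mathbf{x};\mathbf{r},\mathbf{p})$. In particular, if strictly positive $\mathbf{p},\mathbf{x},\mathbf{r}$ satisfy $\mathbf{x}=\mathbf{f}(\mathbf{x};\mathbf{r},\mathbf{p})$, then $p_i=h_i(\bar{\mathbf{p}}_i;\mathbf{x},\mathbf{r})$ for all $i=1,\dots,n$, i.e., in vector form $\mathbf{p}=\mathbf{h}(\mathbf{p};\mathbf{x},\mathbf{r})$.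
   Context: $\log$ is natural logarithm; $\mathbb{R}_{++}$ denotes positive reals. For a vector $\mathbf{p}\in\mathbb{R}^n$, $\bar{\mathbf{p}}_i\in\mathbb{R}^{n-1}$ is $\mathbf{p}$ with its $i$th component removed (note $f_i$ depends on $\mathbf{p}$ only through $p_i$ and $\bar{\mathbf{p}}_i$). $\mathbf{h}(\mathbf{p};\mathbf{x},\mathbf{r})=(h_1(\bar{\mathbf{p}}_1;\mathbf{x},\mathbf{r}),\dots,h_n(\bar{\mathbf{p}}_n;\mathbf{x},\mathbf{r}))^T$. *)

theory Defs
  imports Complex_Main
begin

text \<open>Base stations are the elements of a finite type 'n (so N = UNIV, n = CARD('n)),
  users are elements of a type 'u; J i is the set of users served by station i;
  g k j is the channel gain from station k to user j; sigma2 is the noise power.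
  f_i(x; r, p) as in the paper (log = natural logarithm ln).\<close>

definition fcell ::
  "('n::finite \<Rightarrow> 'u set) \<Rightarrow> ('n \<Rightarrow> 'u \<Rightarrow> real) \<Rightarrow> real \<Rightarrow> 'n
    \<Rightarrow> ('n \<Rightarrow> real) \<Rightarrow> ('n \<Rightarrow> 'u \<Rightarrow> real) \<Rightarrow> ('n \<Rightarrow> real) \<Rightarrow> real" where
  "fcell J g sigma2 i x r p =
     (\<Sum>j\<in>J i. r i j /
        ln (1 + p i * g i j / ((\<Sum>k\<in>UNIV - {i}. p k * g k j * x k) + sigma2)))"

end

theory Submission
  imports Defs "HOL-Real_Asymp.Real_Asymp"
begin

lemma keyex:
  fixes A :: "'u set" and r c :: "'u \<Rightarrow> real" and y :: real
  assumes fin: "finite A" and ne: "A \<noteq> {}" and rp: "\<And>j. j\<in>A \<Longrightarrow> r j > 0"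
    and cp: "\<And>j. j\<in>A \<Longrightarrow> c j > 0" and yp: "y > 0"
  shows "\<exists>!t. t > 0 \<and> y = (\<Sum>j\<in>A. r j / ln (1 + t * c j))"
proof -
  define F where "F t = (\<Sum>j\<in>A. r j / ln (1 + t * c j))" for t
  have mono: "F t < F s" if "0 < s" "s < t" for s t
    unfolding F_def
  proof (rule sum_strict_mono[OF fin ne])
    fix j assume j: "j \<in> A"
    have sc: "s * c j > 0" "s * c j < t * c j" using that cp[OF j] by simp_all
    have "0 < ln (1 + s * c j)" using sc by simp
    moreover have "ln (1 + s * c j) < ln (1 + t * c j)" using sc by simp
    ultimately show "r j / ln (1 + t * c j) < r j / ln (1 + s * c j)"
      using rp[OF j] by (simp add: divide_strict_left_mono mult_pos_pos)
  qed
  obtain j0 where j0: "j0 \<in> A" using ne by blast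
  define a where "a = r j0 / (c j0 * (y + 1))"
  have apos: "a > 0" using rp[OF j0] cp[OF j0] yp by (simp add: a_def)
  have "F a \<ge> r j0 / ln (1 + a * c j0)"
    unfolding F_def
  proof (rule member_le_sum[OF j0 _ fin])
    fix j assume "j \<in> A - {j0}"
    then have "a * c j > 0" "r j > 0" using rp cp apos by auto
    then show "0 \<le> r j / ln (1 + a * c j)" by (simp add: less_imp_le)
  qed
  moreover have "r j0 / ln (1 + a * c j0) \<ge> r j0 / (a * c j0)"
  proof -
    have "a * c j0 > 0" using apos cp[OF j0] by simp
    then have "0 < ln (1 + a * c j0)" by simp
    moreover have "ln (1 + a * c j0) \<le> a * c j0"
      using ln_add_one_self_le_self[of "a * c j0"] apos cp[OF j0] by simp
    ultimately show ?thesis using rp[OF j0] by (simp add: divide_left_mono)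
  qed
  moreover have "r j0 / (a * c j0) = y + 1"
    using rp[OF j0] cp[OF j0] yp by (simp add: a_def field_simps)
  ultimately have Fa: "F a > y" by linarith
  have lim: "(F \<longlongrightarrow> 0) at_top"
  proof -
    have "((\<lambda>t. \<Sum>j\<in>A. r j / ln (1 + t * c j)) \<longlongrightarrow> (\<Sum>j\<in>A. 0)) at_top"
    proof (rule tendsto_sum)
      fix j assume j: "j \<in> A"
      have "c j > 0" using cp[OF j] .
      then show "((\<lambda>t. r j / ln (1 + t * c j)) \<longlongrightarrow> 0) at_top" by real_asymp
    qed
    then show ?thesis by (simp add: F_def[abs_def])
  qed
  have "eventually (\<lambda>t. F t < y \<and> t > a) at_top"
    using order_tendstoD(2)[OF lim yp] eventually_gt_at_top[of a] by (simp add: eventually_conj)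
  then obtain b where b: "F b < y" "b > a" by (auto simp: eventually_at_top_linorder)
  have H: "ln (1 + t * c j) \<noteq> 0 \<and> 0 < 1 + t * c j" if "t \<in> {a..b}" "j \<in> A" for t j
  proof -
    have tc: "t * c j > 0" using that apos cp by simp
    have "0 < ln (1 + t * c j)" using tc by (intro ln_gt_zero) linarith
    then show ?thesis using tc by linarith
  qed
  have cont: "continuous_on {a..b} F"
    unfolding F_def
    by (intro continuous_intros) (use H apos cp in fastforce)+
  obtain t where t: "t \<ge> a" "t \<le> b" "F t = y"
    using IVT2'[of F b y a, OF _ _ _ cont] b Fa by auto
  have "\<exists>!t. t > 0 \<and> y = F t"
  proof (rule ex1I[of _ t])
    show "t > 0 \<and> y = F t" using t apos by simp
  next
    fix s assume s: "s > 0 \<and> y = F s"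
    show "s = t"
    proof (rule ccontr)
      assume "s \<noteq> t"
      then consider "s < t" | "t < s" by linarith
      then show False using mono[of s t] mono[of t s] s t apos by (cases; auto)
    qed
  qed
  then show ?thesis by (simp add: F_def)
qed

theorem lemma4:
  fixes J :: "'n::finite \<Rightarrow> 'u set"
    and g :: "'n \<Rightarrow> 'u \<Rightarrow> real"
    and sigma2 :: real
    and x :: "'n \<Rightarrow> real"
    and r :: "'n \<Rightarrow> 'u \<Rightarrow> real"
  assumes J_fin: "\<And>i. finite (J i)"
    and J_ne: "\<And>i. J i \<noteq> {}"
    and J_disj: "\<And>i i'. i \<noteq> i' \<Longrightarrow> J i \<inter> J i' = {}"
    and g_pos: "\<And>k j. g k j > 0"
    and sigma_pos: "sigma2 > 0"
    and x_pos: "\<And>i. x i > 0"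
    and r_pos: "\<And>i j. j \<in> J i \<Longrightarrow> r i j > 0"
  shows "\<exists>h :: 'n \<Rightarrow> ('n \<Rightarrow> real) \<Rightarrow> real.
           (\<forall>i. \<forall>p. (\<forall>k. k \<noteq> i \<longrightarrow> p k > 0) \<longrightarrow>
                 h i p > 0
               \<and> x i = fcell J g sigma2 i x r (p(i := h i p))
               \<and> (\<forall>t. t > 0 \<and> x i = fcell J g sigma2 i x r (p(i := t)) \<longrightarrow> t = h i p))
         \<and> (\<forall>i. \<forall>p q. (\<forall>k. k \<noteq> i \<longrightarrow> p k = q k) \<longrightarrow> h i p = h i q)
         \<and> (\<forall>p. (\<forall>k. p k > 0) \<and> (\<forall>i. x i = fcell J g sigma2 i x r p)
               \<longrightarrow> (\<forall>i. p i = h i p))"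
proof -
  have uniq: "\<exists>!t. t > 0 \<and> x i = fcell J g sigma2 i x r (p(i := t))"
    if pp: "\<forall>k. k \<noteq> i \<longrightarrow> p k > 0" for i p
  proof -
    define D where "D j = (\<Sum>k\<in>UNIV - {i}. p k * g k j * x k) + sigma2" for j
    have Dpos: "D j > 0" for j
    proof -
      have "(\<Sum>k\<in>UNIV - {i}. p k * g k j * x k) \<ge> 0"
        using pp g_pos x_pos by (intro sum_nonneg) (simp add: less_imp_le)
      then show ?thesis using sigma_pos by (simp add: D_def)
    qed
    have eq: "fcell J g sigma2 i x r (p(i := t)) = (\<Sum>j\<in>J i. r i j / ln (1 + t * (g i j / D j)))" for t
    proof -
      have s: "(\<Sum>k\<in>UNIV - {i}. (p(i := t)) k * g k j * x k) = (\<Sum>k\<in>UNIV - {i}. p k * g k j * x k)" for j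
        by (rule sum.cong) auto
      show ?thesis unfolding fcell_def s D_def[symmetric] by simp
    qed
    have "\<exists>!t. t > 0 \<and> x i = (\<Sum>j\<in>J i. r i j / ln (1 + t * (g i j / D j)))"
      using keyex[where A="J i" and r="r i" and c="\<lambda>j. g i j / D j" and y="x i"] J_fin J_ne r_pos x_pos g_pos Dpos by (simp add: divide_pos_pos)
    then show ?thesis by (simp add: eq)
  qed
  define h where "h i p = (THE t. t > 0 \<and> x i = fcell J g sigma2 i x r (p(i := t)))" for i p
  have hp: "h i p > 0 \<and> x i = fcell J g sigma2 i x r (p(i := h i p))"
    if "\<forall>k. k \<noteq> i \<longrightarrow> p k > 0" for i p
    unfolding h_def using theI'[OF uniq[OF that]] by blast
  have P1: "h i p > 0 \<and> x i = fcell J g sigma2 i x r (p(i := h i p))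
               \<and> (\<forall>t. t > 0 \<and> x i = fcell J g sigma2 i x r (p(i := t)) \<longrightarrow> t = h i p)"
    if a: "\<forall>k. k \<noteq> i \<longrightarrow> p k > 0" for i p
    using uniq[OF a] hp[OF a] by blast
  have P2: "h i p = h i q" if "\<forall>k. k \<noteq> i \<longrightarrow> p k = q k" for i and p q :: "'n \<Rightarrow> real"
  proof -
    from that have "p(i := t) = q(i := t)" for t by auto
    then show ?thesis by (simp add: h_def)
  qed
  have P3: "p i = h i p" if a: "(\<forall>k. p k > 0) \<and> (\<forall>i. x i = fcell J g sigma2 i x r p)" for p i
  proof -
    from a have a': "\<forall>k. k \<noteq> i \<longrightarrow> p k > 0" by auto
    have "p i > 0 \<and> x i = fcell J g sigma2 i x r (p(i := p i))" using a by simp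
    then show ?thesis using uniq[OF a'] hp[OF a'] by blast
  qed
  show ?thesis by (rule exI[of _ h]) (use P1 P2 P3 in blast)
qed

end
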